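(* On an interface element $T$ on which the IFE shape functions are unisolvent, for $s=\pm$ (with $s'$ the opposite sign), the $2\times4$ matrix functions $$\Lambda_s(X)=\sum_{i\in\mathcal I}(A_i-X)^T\otimes\Phi^s_{i}(X)+\sum_{i\in\mathcal I^{s'}}\big((A_i-\overline X_i)^T\otimes\Phi^s_{i}(X)\big)(\overline M^s-I_4)$$ do not depend on the choice of the points $\overline X_i\in l$, $i\in\mathcal I^{s'}$.
   Context: Lamé parameters $\lambda^\pm,\mu^\pm>0$; stress $\sigma^s(\mathbf v)=\lambda^s(\nabla\cdot\mathbf v)I+2\mu^s\epsilon(\mathbf v)$. $T$ is a triangle with $\Pi_T=[\mathrm{span}\{1,x,y\}]^2$ and nodes its vertices, or a square with $\Pi_T=[\mathrm{span}\{1,x,y,xy\}]^2$ and nodes its vertices, or a square with $\Pi_T=[\mathrm{span}\{1,x,y,x^2-y^2\}]^2$ and nodes its edge midpoints; $\mathcal I$ the node index set. $\Gamma$ meets $\partial T$ at $D,E$; $l$ is the line through them with unit normal $\bar{\mathbf n}=(\bar n_1,\bar n_2)$; $l$ splits $T$ into $\overline T^\pm$; $\mathcal I^s=\{i:A_i\in T\cap\Omega^s\}$. IFE shape functions $\boldsymbol\phi_{i,T}$ ($1\le i\le2|\mathcal I|$) are the piecewise functions $\boldsymbol\phi^s\in\Pi_T$ on $\overline T^s$, continuous across $l$, with (bilinear/rotated $Q_1$) equal coefficient vectors of $xy$ (resp. $x^2-y^2$), satisfying $\sigma^+(\boldsymbol\phi^+)(F)\bar{\mathbf n}=\sigma^-(\boldsymbol\phi^-)(F)\bar{\mathbf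 n}$ at a fixed $F\in l$, with $\boldsymbol\phi_{i,T}(A_j)=(\delta_{ij},0)^T$ ($i\le|\mathcal I|$), $(0,\delta_{i-|\mathcal I|,j})^T$ ($i>|\mathcal I|$). $\Phi_{i,T}=[\boldsymbol\phi_{i,T},\boldsymbol\phi_{i+|\mathcal I|,T}]$ and $\Phi^s_i$ denotes the $2\times2$ matrix polynomial equal to $\Phi_{i,T}$ on $\overline T^s$. $\overline N^s$ is the $4\times4$ matrix with rows $((\lambda^s+2\mu^s)\bar n_1,\mu^s\bar n_2,\mu^s\bar n_2,\lambda^s\bar n_1)$, $(\lambda^s\bar n_2,\mu^s\bar n_1,\mu^s\bar n_1,(\lambda^s+2\mu^s)\bar n_2)$, $(-\bar n_2,0,\bar n_1,0)$, $(0,-\bar n_2,0,\bar n_1)$; $\overline M^-=(\overline N^+)^{-1}\overline N^-$, $\overline M^+=(\overline N^-)^{-1}\overline N^+$. $\otimes$ is the Kronecker product. *)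

theory Defs
  imports "HOL-Analysis.Analysis" "Jordan_Normal_Form.Gauss_Jordan_Elimination"
begin

type_synonym pt = "real \<times> real"

text \<open>The three element kinds: triangle with P1 (nodes = vertices), axis-aligned square
 with bilinear Q1 (nodes = vertices), axis-aligned square with rotated Q1 (nodes = edge midpoints).\<close>
datatype elem_kind = TriP1 | SqQ1 | SqRotQ1

fun pdim :: "elem_kind \<Rightarrow> nat" where
  "pdim TriP1 = 3" | "pdim SqQ1 = 4" | "pdim SqRotQ1 = 4"

fun nnodes :: "elem_kind \<Rightarrow> nat" where
  "nnodes TriP1 = 3" | "nnodes SqQ1 = 4" | "nnodes SqRotQ1 = 4"

fun pbasis :: "elem_kind \<Rightarrow> nat \<Rightarrow> pt \<Rightarrow> real" where
  "pbasis k j (x, y) =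
     (if j = 0 then 1 else if j = 1 then x else if j = 2 then y
      else if j = 3 then (case k of SqQ1 \<Rightarrow> x * y | SqRotQ1 \<Rightarrow> x^2 - y^2 | TriP1 \<Rightarrow> 0)
      else 0)"

definition pi_coeffs :: "elem_kind \<Rightarrow> (nat \<Rightarrow> pt) \<Rightarrow> (pt \<Rightarrow> pt) \<Rightarrow> bool" where
  "pi_coeffs k c phi \<longleftrightarrow> (\<forall>p. phi p = (\<Sum>j<pdim k. pbasis k j p *\<^sub>R c j))"

definition in_Pi2 :: "elem_kind \<Rightarrow> (pt \<Rightarrow> pt) \<Rightarrow> bool" where
  "in_Pi2 k phi \<longleftrightarrow> (\<exists>c. pi_coeffs k c phi)"

definition valid_elem :: "elem_kind \<Rightarrow> pt set \<Rightarrow> (nat \<Rightarrow> pt) \<Rightarrow> bool" where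
  "valid_elem k T A \<longleftrightarrow> inj_on A {..<nnodes k} \<and>
     (case k of
        TriP1 \<Rightarrow> \<not> collinear (A ` {..<3}) \<and> T = convex hull (A ` {..<3})
      | SqQ1 \<Rightarrow> (\<exists>x0 y0 h. h > 0 \<and> T = cbox (x0, y0) (x0 + h, y0 + h) \<and>
                 A ` {..<4} = {(x0, y0), (x0 + h, y0), (x0 + h, y0 + h), (x0, y0 + h)})
      | SqRotQ1 \<Rightarrow> (\<exists>x0 y0 h. h > 0 \<and> T = cbox (x0, y0) (x0 + h, y0 + h) \<and>
                 A ` {..<4} = {(x0 + h/2, y0), (x0 + h, y0 + h/2), (x0 + h/2, y0 + h), (x0, y0 + h/2)}))"

text \<open>Traction sigma^s(v)(F) n for Lame parameters lam, mu, with
  sigma(v) = lam (div v) I + 2 mu eps(v), eps(v) = (grad v + grad v^T)/2.\<close>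
definition traction :: "real \<Rightarrow> real \<Rightarrow> (pt \<Rightarrow> pt) \<Rightarrow> pt \<Rightarrow> pt \<Rightarrow> pt" where
  "traction lam mu v F n =
    (let Dv = frechet_derivative v (at F);
         v1x = fst (Dv (1, 0)); v2x = snd (Dv (1, 0));
         v1y = fst (Dv (0, 1)); v2y = snd (Dv (0, 1));
         dv = v1x + v2y; e12 = (v2x + v1y) / 2;
         s11 = lam * dv + 2 * mu * v1x; s22 = lam * dv + 2 * mu * v2y; s12 = 2 * mu * e12
     in (s11 * fst n + s12 * snd n, s12 * fst n + s22 * snd n))"

definition line_l :: "pt \<Rightarrow> pt \<Rightarrow> pt set" where
  "line_l D nb = {p. (p - D) \<bullet> nb = 0}"

text \<open>Evaluation of the piecewise function (phi+ on T+, phi- on T-), where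
  T+ is the side of l into which nb points.\<close>
definition pw_eval :: "pt \<Rightarrow> pt \<Rightarrow> (pt \<Rightarrow> pt) \<times> (pt \<Rightarrow> pt) \<Rightarrow> pt \<Rightarrow> pt" where
  "pw_eval D nb phis p = (if (p - D) \<bullet> nb \<ge> 0 then fst phis p else snd phis p)"

definition nodal_val :: "nat \<Rightarrow> nat \<Rightarrow> nat \<Rightarrow> pt" where
  "nodal_val nI i j = (if i < nI then (if i = j then 1 else 0, 0)
                       else (0, if i - nI = j then 1 else 0))"

definition ife_cond :: "elem_kind \<Rightarrow> pt set \<Rightarrow> (nat \<Rightarrow> pt) \<Rightarrow> pt \<Rightarrow> pt \<Rightarrow> pt \<Rightarrow>
    real \<Rightarrow> real \<Rightarrow> real \<Rightarrow> real \<Rightarrow> nat \<Rightarrow> (pt \<Rightarrow> pt) \<times> (pt \<Rightarrow> pt) \<Rightarrow> bool" where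
  "ife_cond k T A D nb F lp mp lm mm i phis \<longleftrightarrow>
     in_Pi2 k (fst phis) \<and> in_Pi2 k (snd phis) \<and>
     (\<forall>p \<in> T \<inter> line_l D nb. fst phis p = snd phis p) \<and>
     (k \<noteq> TriP1 \<longrightarrow> (\<exists>cp cm. pi_coeffs k cp (fst phis) \<and> pi_coeffs k cm (snd phis) \<and> cp 3 = cm 3)) \<and>
     traction lp mp (fst phis) F nb = traction lm mm (snd phis) F nb \<and>
     (\<forall>j < nnodes k. pw_eval D nb phis (A j) = nodal_val (nnodes k) i j)"

definition unisolvent :: "elem_kind \<Rightarrow> pt set \<Rightarrow> (nat \<Rightarrow> pt) \<Rightarrow> pt \<Rightarrow> pt \<Rightarrow> pt \<Rightarrow>
    real \<Rightarrow> real \<Rightarrow> real \<Rightarrow> real \<Rightarrow> bool" where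
  "unisolvent k T A D nb F lp mp lm mm \<longleftrightarrow>
     (\<forall>i < 2 * nnodes k. \<exists>!phis. ife_cond k T A D nb F lp mp lm mm i phis)"

definition shape_fun :: "elem_kind \<Rightarrow> pt set \<Rightarrow> (nat \<Rightarrow> pt) \<Rightarrow> pt \<Rightarrow> pt \<Rightarrow> pt \<Rightarrow>
    real \<Rightarrow> real \<Rightarrow> real \<Rightarrow> real \<Rightarrow> nat \<Rightarrow> (pt \<Rightarrow> pt) \<times> (pt \<Rightarrow> pt)" where
  "shape_fun k T A D nb F lp mp lm mm i = (THE phis. ife_cond k T A D nb F lp mp lm mm i phis)"

text \<open>Sign s: True = +, False = -.  Component of the polynomial phi^s.\<close>
definition side :: "bool \<Rightarrow> ('a \<times> 'a) \<Rightarrow> 'a" where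
  "side s pr = (if s then fst pr else snd pr)"

text \<open>Phi^s_i(X) = [phi^s_i(X), phi^s_{i+|I|}(X)] (2x2).\<close>
definition Phi_mat :: "elem_kind \<Rightarrow> pt set \<Rightarrow> (nat \<Rightarrow> pt) \<Rightarrow> pt \<Rightarrow> pt \<Rightarrow> pt \<Rightarrow>
    real \<Rightarrow> real \<Rightarrow> real \<Rightarrow> real \<Rightarrow> bool \<Rightarrow> nat \<Rightarrow> pt \<Rightarrow> real mat" where
  "Phi_mat k T A D nb F lp mp lm mm s i X =
     mat 2 2 (\<lambda>(r, c). (let v = side s (shape_fun k T A D nb F lp mp lm mm (i + c * nnodes k)) X
                        in if r = 0 then fst v else snd v))"

definition kron :: "'a::times mat \<Rightarrow> 'a mat \<Rightarrow> 'a mat" where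
  "kron P Q = mat (dim_row P * dim_row Q) (dim_col P * dim_col Q)
     (\<lambda>(i, j). P $$ (i div dim_row Q, j div dim_col Q) * Q $$ (i mod dim_row Q, j mod dim_col Q))"

definition row_vec :: "pt \<Rightarrow> real mat" where
  "row_vec p = mat_of_rows_list 2 [[fst p, snd p]]"

definition mat_sum :: "nat \<Rightarrow> nat \<Rightarrow> ('b \<Rightarrow> 'a::comm_monoid_add mat) \<Rightarrow> 'b set \<Rightarrow> 'a mat" where
  "mat_sum nr nc f S = mat nr nc (\<lambda>ij. \<Sum>i\<in>S. f i $$ ij)"

definition Nbar :: "real \<Rightarrow> real \<Rightarrow> pt \<Rightarrow> real mat" where
  "Nbar lam mu n = mat_of_rows_list 4
     [[(lam + 2 * mu) * fst n, mu * snd n, mu * snd n, lam * fst n],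
      [lam * snd n, mu * fst n, mu * fst n, (lam + 2 * mu) * snd n],
      [- snd n, 0, fst n, 0],
      [0, - snd n, 0, fst n]]"

definition Mbar :: "real \<Rightarrow> real \<Rightarrow> real \<Rightarrow> real \<Rightarrow> pt \<Rightarrow> bool \<Rightarrow> real mat" where
  "Mbar lp mp lm mm n s =
     (if s then the (mat_inverse (Nbar lm mm n)) * Nbar lp mp n
      else the (mat_inverse (Nbar lp mp n)) * Nbar lm mm n)"

definition node_side :: "elem_kind \<Rightarrow> pt set \<Rightarrow> (nat \<Rightarrow> pt) \<Rightarrow> pt set \<Rightarrow> nat set" where
  "node_side k T A Om = {i. i < nnodes k \<and> A i \<in> T \<inter> Om}"

definition Lambda :: "elem_kind \<Rightarrow> pt set \<Rightarrow> (nat \<Rightarrow> pt) \<Rightarrow> pt \<Rightarrow> pt \<Rightarrow> pt \<Rightarrow>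
    real \<Rightarrow> real \<Rightarrow> real \<Rightarrow> real \<Rightarrow> pt set \<Rightarrow> pt set \<Rightarrow> bool \<Rightarrow> pt \<Rightarrow> (nat \<Rightarrow> pt) \<Rightarrow> real mat" where
  "Lambda k T A D nb F lp mp lm mm Omp Omm s X Xb =
     mat_sum 2 4 (\<lambda>i. kron (row_vec (A i - X)) (Phi_mat k T A D nb F lp mp lm mm s i X)) {..<nnodes k}
     + mat_sum 2 4 (\<lambda>i. kron (row_vec (A i - Xb i)) (Phi_mat k T A D nb F lp mp lm mm s i X)
                        * (Mbar lp mp lm mm nb s - 1\<^sub>m 4))
         (node_side k T A (if s then Omm else Omp))"

end

theory Submission imports Defs "Jordan_Normal_Form.Determinant" begin

lemma row_vec_dims[simp]: "dim_row (row_vec p) = 1" "dim_col (row_vec p) = 2"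
  by (auto simp: row_vec_def mat_of_rows_list_def)

lemma row_vec_idx: "j < 2 \<Longrightarrow> row_vec p $$ (0, j) = (if j = 0 then fst p else snd p)"
  by (auto simp: row_vec_def mat_of_rows_list_def less_2_cases_iff)

lemma kron_dims[simp]: "dim_row (kron P Q) = dim_row P * dim_row Q" "dim_col (kron P Q) = dim_col P * dim_col Q"
  by (auto simp: kron_def)

lemma Nbar_carrier: "Nbar lam mu n \<in> carrier_mat 4 4"
  by (rule carrier_matI) (simp_all add: Nbar_def mat_of_rows_list_def)

lemma Nbar_idx: "Nbar lam mu n $$ (i, j) = [[(lam + 2 * mu) * fst n, mu * snd n, mu * snd n, lam * fst n],
      [lam * snd n, mu * fst n, mu * fst n, (lam + 2 * mu) * snd n],
      [- snd n, 0, fst n, 0],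
      [0, - snd n, 0, fst n]] ! i ! j" if "i < 4" "j < 4"
  using that unfolding Nbar_def mat_of_rows_list_def by (subst index_mat) auto

lemma Nbar_kernel:
  fixes a b c d lam mu :: real
  assumes n: "fst n ^ 2 + snd n ^ 2 = 1" and pos: "lam > 0" "mu > 0"
  and e1: "(lam + 2*mu) * fst n * a + mu * snd n * b + mu * snd n * c + lam * fst n * d = 0"
  and e2: "lam * snd n * a + mu * fst n * b + mu * fst n * c + (lam + 2*mu) * snd n * d = 0"
  and e3: "- snd n * a + fst n * c = 0"
  and e4: "- snd n * b + fst n * d = 0"
  shows "a = 0 \<and> b = 0 \<and> c = 0 \<and> d = 0"
proof -
  define n1 where "n1 = fst n" define n2 where "n2 = snd n"
  have nn: "n1*n1 + n2*n2 = 1" using n by (simp add: n1_def n2_def power2_eq_square)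
  have e3': "n1 * c = n2 * a" using e3 by (simp add: n1_def n2_def algebra_simps)
  have e4': "n1 * d = n2 * b" using e4 by (simp add: n1_def n2_def algebra_simps)
  define al where "al = a*n1 + c*n2" define be where "be = b*n1 + d*n2"
  have ha: "a = al*n1"
  proof -
    have "al*n1 = a*(n1*n1) + n2*(n1*c)" by (simp add: al_def algebra_simps)
    also have "\<dots> = a*(n1*n1 + n2*n2)" using e3' by (simp add: algebra_simps)
    finally show ?thesis using nn by simp
  qed
  have hc: "c = al*n2"
  proof -
    have "al*n2 = n1*(n1*c) + c*(n2*n2)" using e3' by (simp add: al_def algebra_simps)
    also have "\<dots> = c*(n1*n1 + n2*n2)" by (simp add: algebra_simps)
    finally show ?thesis using nn by simp
  qed
  have hb: "b = be*n1"
  proof -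
    have "be*n1 = b*(n1*n1) + n2*(n1*d)" by (simp add: be_def algebra_simps)
    also have "\<dots> = b*(n1*n1 + n2*n2)" using e4' by (simp add: algebra_simps)
    finally show ?thesis using nn by simp
  qed
  have hd: "d = be*n2"
  proof -
    have "be*n2 = n1*(n1*d) + d*(n2*n2)" using e4' by (simp add: be_def algebra_simps)
    also have "\<dots> = d*(n1*n1 + n2*n2)" by (simp add: algebra_simps)
    finally show ?thesis using nn by simp
  qed
  define P where "P = (lam + 2*mu)*n1*n1 + mu*n2*n2"
  define Q where "Q = (lam + mu)*n1*n2"
  define R where "R = mu*n1*n1 + (lam + 2*mu)*n2*n2"
  have f1: "al*P + be*Q = 0" using e1 unfolding ha hb hc hd P_def Q_def n1_def[symmetric] n2_def[symmetric]
    by (simp add: algebra_simps)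
  have f2: "al*Q + be*R = 0" using e2 unfolding ha hb hc hd R_def Q_def n1_def[symmetric] n2_def[symmetric]
    by (simp add: algebra_simps)
  have det: "P*R - Q*Q = mu*(lam+2*mu)*((n1*n1+n2*n2)*(n1*n1+n2*n2))"
    unfolding P_def Q_def R_def by (simp add: algebra_simps)
  have dpos: "P*R - Q*Q \<noteq> 0" unfolding det nn using pos by simp
  have "al*(P*R - Q*Q) = R*(al*P + be*Q) - Q*(al*Q + be*R)" by (simp add: algebra_simps)
  hence "al = 0" using f1 f2 dpos by simp
  have "be*(P*R - Q*Q) = P*(al*Q + be*R) - Q*(al*P + be*Q)" by (simp add: algebra_simps)
  hence "be = 0" using f1 f2 dpos by simp
  show ?thesis using \<open>al = 0\<close> \<open>be = 0\<close> ha hb hc hd by simp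
qed


lemma Nbar_inv:
  assumes n: "fst n ^ 2 + snd n ^ 2 = 1" and pos: "lam > 0" "mu > 0"
  shows "Nbar lam mu n * the (mat_inverse (Nbar lam mu n)) = 1\<^sub>m 4
     \<and> the (mat_inverse (Nbar lam mu n)) \<in> carrier_mat 4 4"
proof -
  let ?N = "Nbar lam mu n"
  have C: "?N \<in> carrier_mat 4 4" by (rule Nbar_carrier)
  have "Determinant.det ?N \<noteq> 0"
  proof
    assume "Determinant.det ?N = 0"
    then obtain v where v: "v \<in> carrier_vec 4" "v \<noteq> 0\<^sub>v 4" "?N *\<^sub>v v = 0\<^sub>v 4"
      using det_0_iff_vec_prod_zero[OF C] by auto
    have eq: "Matrix.scalar_prod (Matrix.row ?N i) v = 0" if "i < 4" for i
      using v(3) that C by (metis carrier_matD(1) index_mult_mat_vec index_zero_vec(1))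
    have dv: "dim_vec v = 4" using v(1) by auto
    have sp: "Matrix.scalar_prod (Matrix.row ?N i) v = (\<Sum>j<4. ?N $$ (i,j) * vec_index v j)" if "i < 4" for i
      using that dv C unfolding scalar_prod_def by (auto intro!: sum.cong simp: lessThan_atLeast0)
    have four: "(\<Sum>j<(4::nat). f j) = f 0 + f 1 + f 2 + (f 3 :: real)" for f
      by (simp add: eval_nat_numeral)
    have E: "\<And>i. i < 4 \<Longrightarrow> (\<Sum>j<4. ?N $$ (i,j) * vec_index v j) = 0" using eq sp by simp
    note E0 = E[of 0, unfolded four] and E1 = E[of 1, unfolded four]
      and E2 = E[of 2, unfolded four] and E3 = E[of 3, unfolded four]
    have "vec_index v 0 = 0 \<and> vec_index v 1 = 0 \<and> vec_index v 2 = 0 \<and> vec_index v 3 = 0"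
      apply (rule Nbar_kernel[OF n pos])
      using E0 E1 E2 E3 by (simp_all add: Nbar_idx algebra_simps)
    hence "v = 0\<^sub>v 4" using dv
      by (intro eq_vecI) (auto simp: less_Suc_eq numeral_eq_Suc)
    with v(2) show False by simp
  qed
  hence U: "?N \<in> Units (ring_mat TYPE(real) 4 undefined)" by (rule det_non_zero_imp_unit[OF C])
  have "mat_inverse ?N \<noteq> None" using mat_inverse(1)[OF C, of undefined] U by blast
  then obtain B where "mat_inverse ?N = Some B" by auto
  hence "?N * B = 1\<^sub>m 4 \<and> B \<in> carrier_mat 4 4" using mat_inverse(2)[OF C] by blast
  with \<open>mat_inverse ?N = Some B\<close> show ?thesis by simp
qed

definition Rm :: "real \<Rightarrow> real mat" where
  "Rm c = mat 2 4 (\<lambda>(i,j). if j = i + 2 then c else 0)"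

lemma Rm_carrier: "Rm c \<in> carrier_mat 2 4" by (simp add: Rm_def)

lemma sum4: "(\<Sum>j\<in>{0..<4::nat}. f j) = f 0 + f 1 + f 2 + (f 3 :: real)"
  by (simp add: eval_nat_numeral atLeast0_lessThan_Suc)
lemma sum2: "(\<Sum>j\<in>{0..<2::nat}. f j) = f 0 + (f 1 :: real)"
  by (simp add: eval_nat_numeral atLeast0_lessThan_Suc)
lemma lt4: "(j::nat) < 4 \<longleftrightarrow> j = 0 \<or> j = 1 \<or> j = 2 \<or> j = 3" by auto
lemma lt2: "(j::nat) < 2 \<longleftrightarrow> j = 0 \<or> j = 1" by auto

lemma RN_idx:
  assumes "i < 2" "j < 4"
  shows "(Rm c * Nbar l m n) $$ (i,j) = c * Nbar l m n $$ (i+2,j)"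
proof -
  have C: "Nbar l m n \<in> carrier_mat 4 4" by (rule Nbar_carrier)
  have "(Rm c * Nbar l m n) $$ (i,j) = (\<Sum>k\<in>{0..<4}. Rm c $$ (i,k) * Nbar l m n $$ (k,j))"
    using assms C by (simp add: index_mult_mat Rm_def scalar_prod_def)
  also have "\<dots> = (\<Sum>k\<in>{0..<4}. (if k = i + 2 then c * Nbar l m n $$ (k,j) else 0))"
    using assms by (intro sum.cong) (auto simp: Rm_def)
  also have "\<dots> = c * Nbar l m n $$ (i+2,j)" using assms by (subst sum.delta) auto
  finally show ?thesis .
qed

lemma kron_idx:
  assumes "i < 2" "j < 4" "Phi \<in> carrier_mat 2 2"
  shows "kron (row_vec w) Phi $$ (i,j) = (if j div 2 = 0 then fst w else snd w) * Phi $$ (i, j mod 2)"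
proof -
  have "j div 2 < 2" using assms by auto
  thus ?thesis using assms by (simp add: kron_def row_vec_idx)
qed

lemma kron_tan:
  fixes w nb :: pt and Phi :: "real mat"
  assumes wn: "w \<bullet> nb = 0" and n: "fst nb ^ 2 + snd nb ^ 2 = 1" and P: "Phi \<in> carrier_mat 2 2"
  shows "kron (row_vec w) Phi = Phi * (Rm (- fst w * snd nb + snd w * fst nb) * Nbar lam mu nb)"
proof -
  define c where "c = - fst w * snd nb + snd w * fst nb"
  have wn': "fst w * fst nb + snd w * snd nb = 0" using wn by (simp add: inner_prod_def)
  have w1: "c * (- snd nb) = fst w"
  proof -
    have "c * (- snd nb) = fst w * (snd nb * snd nb) - fst nb * (snd w * snd nb)"
      by (simp add: c_def algebra_simps)
    also have "snd w * snd nb = - (fst w * fst nb)" using wn' by simp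
    also have "fst w * (snd nb * snd nb) - fst nb * (- (fst w * fst nb)) = fst w * (fst nb ^ 2 + snd nb ^ 2)"
      by (simp add: algebra_simps power2_eq_square)
    finally show ?thesis using n by simp
  qed
  have w2: "c * fst nb = snd w"
  proof -
    have "c * fst nb = snd w * (fst nb * fst nb) - snd nb * (fst w * fst nb)"
      by (simp add: c_def algebra_simps)
    also have "fst w * fst nb = - (snd w * snd nb)" using wn' by simp
    also have "snd w * (fst nb * fst nb) - snd nb * (- (snd w * snd nb)) = snd w * (fst nb ^ 2 + snd nb ^ 2)"
      by (simp add: algebra_simps power2_eq_square)
    finally show ?thesis using n by simp
  qed
  have dP: "dim_row Phi = 2" "dim_col Phi = 2" using P by auto
  have RNc: "Rm c * Nbar lam mu nb \<in> carrier_mat 2 4" using Rm_carrier Nbar_carrier by (rule mult_carrier_mat)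
  have dRN: "dim_row (Rm c * Nbar lam mu nb) = 2" "dim_col (Rm c * Nbar lam mu nb) = 4" using RNc by auto
  show ?thesis unfolding c_def[symmetric]
  proof (rule eq_matI)
    fix i j assume i: "i < dim_row (Phi * (Rm c * Nbar lam mu nb))" and j: "j < dim_col (Phi * (Rm c * Nbar lam mu nb))"
    have i2: "i < 2" and j4: "j < 4" using i j dP RNc by auto
    have "(Phi * (Rm c * Nbar lam mu nb)) $$ (i, j) = (\<Sum>k\<in>{0..<2}. Phi $$ (i,k) * (Rm c * Nbar lam mu nb) $$ (k,j))"
      using i2 j4 dP dRN by (subst index_mult_mat(1)) (auto simp: scalar_prod_def intro!: sum.cong)
    also have "\<dots> = Phi $$ (i,0) * (c * Nbar lam mu nb $$ (2,j)) + Phi $$ (i,1) * (c * Nbar lam mu nb $$ (3,j))"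
      using j4 by (simp add: sum2 RN_idx numeral_eq_Suc)
    finally have R: "(Phi * (Rm c * Nbar lam mu nb)) $$ (i, j) = \<dots>" .
    show "kron (row_vec w) Phi $$ (i, j) = (Phi * (Rm c * Nbar lam mu nb)) $$ (i, j)"
      unfolding R kron_idx[OF i2 j4 P] w1[symmetric] w2[symmetric]
      using j4 unfolding lt4
      by (auto simp: Nbar_idx algebra_simps)
  qed (use dP RNc in auto)
qed

lemma Minv_fix:
  fixes w nb :: pt and Phi :: "real mat"
  assumes wn: "w \<bullet> nb = 0" and n: "fst nb ^ 2 + snd nb ^ 2 = 1" and P: "Phi \<in> carrier_mat 2 2"
    and pos: "l1 > 0" "m1 > 0" "l2 > 0" "m2 > 0"
  shows "kron (row_vec w) Phi * (the (mat_inverse (Nbar l1 m1 nb)) * Nbar l2 m2 nb) = kron (row_vec w) Phi"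
proof -
  define c where "c = - fst w * snd nb + snd w * fst nb"
  define B where "B = the (mat_inverse (Nbar l1 m1 nb))"
  have NB: "Nbar l1 m1 nb * B = 1\<^sub>m 4" "B \<in> carrier_mat 4 4"
    using Nbar_inv[OF n pos(1,2)] unfolding B_def by auto
  have K1: "kron (row_vec w) Phi = Phi * (Rm c * Nbar l1 m1 nb)" unfolding c_def by (rule kron_tan[OF wn n P])
  have K2: "kron (row_vec w) Phi = Phi * (Rm c * Nbar l2 m2 nb)" unfolding c_def by (rule kron_tan[OF wn n P])
  have C1: "Nbar l1 m1 nb \<in> carrier_mat 4 4" and C2: "Nbar l2 m2 nb \<in> carrier_mat 4 4" by (rule Nbar_carrier)+
  have R: "Rm c \<in> carrier_mat 2 4" by (rule Rm_carrier)
  have RN1: "Rm c * Nbar l1 m1 nb \<in> carrier_mat 2 4" using R C1 by (rule mult_carrier_mat)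
  have BN2: "B * Nbar l2 m2 nb \<in> carrier_mat 4 4" using NB(2) C2 by (rule mult_carrier_mat)
  have "(Phi * (Rm c * Nbar l1 m1 nb)) * (B * Nbar l2 m2 nb) = Phi * ((Rm c * Nbar l1 m1 nb) * (B * Nbar l2 m2 nb))"
    using P RN1 BN2 by (rule assoc_mult_mat)
  also have "(Rm c * Nbar l1 m1 nb) * (B * Nbar l2 m2 nb) = Rm c * (Nbar l1 m1 nb * (B * Nbar l2 m2 nb))"
    using R C1 BN2 by (rule assoc_mult_mat)
  also have "Nbar l1 m1 nb * (B * Nbar l2 m2 nb) = (Nbar l1 m1 nb * B) * Nbar l2 m2 nb"
    using C1 NB(2) C2 by (rule assoc_mult_mat[symmetric])
  also have "\<dots> = Nbar l2 m2 nb" unfolding NB(1) using C2 by (rule left_mult_one_mat)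
  finally show ?thesis unfolding B_def[symmetric] using K1 K2 by simp
qed

lemma Mbar_fix:
  fixes w nb :: pt and Phi :: "real mat"
  assumes wn: "w \<bullet> nb = 0" and n: "fst nb ^ 2 + snd nb ^ 2 = 1" and P: "Phi \<in> carrier_mat 2 2"
    and pos: "lp > 0" "mp > 0" "lm > 0" "mm > 0"
  shows "kron (row_vec w) Phi * Mbar lp mp lm mm nb s = kron (row_vec w) Phi"
proof (cases s)
  case True
  thus ?thesis unfolding Mbar_def using Minv_fix[OF wn n P pos(3,4,1,2)] by (simp only: if_True)
next
  case False
  thus ?thesis unfolding Mbar_def using Minv_fix[OF wn n P pos(1,2,3,4)] by (simp only: if_False)
qed

lemma Mbar_carrier:
  assumes n: "fst nb ^ 2 + snd nb ^ 2 = 1" and pos: "lp > 0" "mp > 0" "lm > 0" "mm > 0"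
  shows "Mbar lp mp lm mm nb s \<in> carrier_mat 4 4"
proof -
  have A1: "the (mat_inverse (Nbar lm mm nb)) * Nbar lp mp nb \<in> carrier_mat 4 4"
    using conjunct2[OF Nbar_inv[OF n pos(3,4)]] Nbar_carrier by (rule mult_carrier_mat)
  have A2: "the (mat_inverse (Nbar lp mp nb)) * Nbar lm mm nb \<in> carrier_mat 4 4"
    using conjunct2[OF Nbar_inv[OF n pos(1,2)]] Nbar_carrier by (rule mult_carrier_mat)
  show ?thesis unfolding Mbar_def using A1 A2 by (cases s) (simp only: if_True if_False)+
qed

lemma kron_carrier: assumes "Phi \<in> carrier_mat 2 2" shows "kron (row_vec w) Phi \<in> carrier_mat 2 4"
proof -
  have "dim_row Phi = 2" "dim_col Phi = 2" using assms by auto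
  thus ?thesis by (intro carrier_matI) simp_all
qed

lemma kron_add:
  assumes P: "Phi \<in> carrier_mat 2 2"
  shows "kron (row_vec (u + v)) Phi = kron (row_vec u) Phi + kron (row_vec v) Phi"
proof -
  have C1: "kron (row_vec u) Phi \<in> carrier_mat 2 4" and C2: "kron (row_vec v) Phi \<in> carrier_mat 2 4"
    and C3: "kron (row_vec (u+v)) Phi \<in> carrier_mat 2 4" using P by (rule kron_carrier)+
  have C4: "kron (row_vec u) Phi + kron (row_vec v) Phi \<in> carrier_mat 2 4" using C2 by (rule add_carrier_mat)
  show ?thesis
  proof (rule eq_matI)
    fix i j assume "i < dim_row (kron (row_vec u) Phi + kron (row_vec v) Phi)"
      "j < dim_col (kron (row_vec u) Phi + kron (row_vec v) Phi)"
    hence i: "i < 2" and j: "j < 4" using C4 by auto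
    have "(kron (row_vec u) Phi + kron (row_vec v) Phi) $$ (i, j) = kron (row_vec u) Phi $$ (i, j) + kron (row_vec v) Phi $$ (i, j)"
      using i j C2 by (intro index_add_mat(1)) auto
    also have "\<dots> = kron (row_vec (u + v)) Phi $$ (i, j)"
      unfolding kron_idx[OF i j P] by (simp add: algebra_simps)
    finally show "kron (row_vec (u + v)) Phi $$ (i, j) = (kron (row_vec u) Phi + kron (row_vec v) Phi) $$ (i, j)" by simp
  next
    show "dim_row (kron (row_vec (u + v)) Phi) = dim_row (kron (row_vec u) Phi + kron (row_vec v) Phi)"
      using C3 C4 by simp
    show "dim_col (kron (row_vec (u + v)) Phi) = dim_col (kron (row_vec u) Phi + kron (row_vec v) Phi)"
      using C3 C4 by simp
  qed
qed

lemma diff_step: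
  fixes a x y nb :: pt and Phi M :: "real mat"
  assumes P: "Phi \<in> carrier_mat 2 2" and M: "M \<in> carrier_mat 4 4"
    and fx: "kron (row_vec (y - x)) Phi * M = kron (row_vec (y - x)) Phi"
  shows "kron (row_vec (a - x)) Phi * (M - 1\<^sub>m 4) = kron (row_vec (a - y)) Phi * (M - 1\<^sub>m 4)"
proof -
  let ?P = "kron (row_vec (a - y)) Phi" and ?Q = "kron (row_vec (y - x)) Phi"
  have CP: "?P \<in> carrier_mat 2 4" and CQ: "?Q \<in> carrier_mat 2 4" using P by (auto intro: kron_carrier)
  have M1: "M - 1\<^sub>m 4 \<in> carrier_mat 4 4" using M by auto
  have "a - x = (a - y) + (y - x)" by simp
  hence "kron (row_vec (a - x)) Phi = ?P + ?Q" using kron_add[OF P] by metis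
  hence "kron (row_vec (a - x)) Phi * (M - 1\<^sub>m 4) = ?P * (M - 1\<^sub>m 4) + ?Q * (M - 1\<^sub>m 4)"
    using add_mult_distrib_mat[OF CP CQ M1] by simp
  also have "?Q * (M - 1\<^sub>m 4) = ?Q * M - ?Q * 1\<^sub>m 4"
    using mult_minus_distrib_mat[OF CQ M] by simp
  also have "\<dots> = 0\<^sub>m 2 4" unfolding fx using CQ by (simp add: right_mult_one_mat)
  also have "?P * (M - 1\<^sub>m 4) + 0\<^sub>m 2 4 = ?P * (M - 1\<^sub>m 4)"
    using CP M1 by (intro right_add_zero_mat) (rule mult_carrier_mat)
  finally show ?thesis .
qed

theorem mainTheorem13:
  fixes k :: elem_kind and T :: "pt set" and A :: "nat \<Rightarrow> pt"
    and Gam Omp Omm :: "pt set" and D E nb F :: pt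
    and lp mp lm mm :: real
  assumes "valid_elem k T A"
    and "lp > 0" "mp > 0" "lm > 0" "mm > 0"
    and "Omp \<inter> Omm = {}" "Gam \<inter> Omp = {}" "Gam \<inter> Omm = {}"
    and "\<forall>j < nnodes k. A j \<in> Omp \<union> Omm"
    and "D \<noteq> E" "D \<in> Gam" "E \<in> Gam" "D \<in> frontier T" "E \<in> frontier T"
    and "norm nb = 1" "(E - D) \<bullet> nb = 0"
    and "F \<in> line_l D nb"
    and "unisolvent k T A D nb F lp mp lm mm"
  shows "\<forall>s X Xb Yb.
           (\<forall>i \<in> node_side k T A (if s then Omm else Omp). Xb i \<in> line_l D nb \<and> Yb i \<in> line_l D nb)
           \<longrightarrow> Lambda k T A D nb F lp mp lm mm Omp Omm s X Xb
             = Lambda k T A D nb F lp mp lm mm Omp Omm s X Yb"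
proof (intro allI impI)
  fix s X Xb Yb
  assume H: "\<forall>i \<in> node_side k T A (if s then Omm else Omp). Xb i \<in> line_l D nb \<and> Yb i \<in> line_l D nb"
  have pos: "lp > 0" "mp > 0" "lm > 0" "mm > 0" using assms by auto
  have "sqrt ((fst nb)\<^sup>2 + (snd nb)\<^sup>2) = 1"
    using \<open>norm nb = 1\<close> norm_Pair[of "fst nb" "snd nb"] by simp
  hence n: "fst nb ^ 2 + snd nb ^ 2 = 1" by simp
  let ?M = "Mbar lp mp lm mm nb s"
  have M: "?M \<in> carrier_mat 4 4" by (rule Mbar_carrier[OF n pos])
  let ?Ph = "\<lambda>i. Phi_mat k T A D nb F lp mp lm mm s i X"
  have Ph: "?Ph i \<in> carrier_mat 2 2" for i by (simp add: Phi_mat_def)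
  have eq: "kron (row_vec (A i - Xb i)) (?Ph i) * (?M - 1\<^sub>m 4) = kron (row_vec (A i - Yb i)) (?Ph i) * (?M - 1\<^sub>m 4)"
    if "i \<in> node_side k T A (if s then Omm else Omp)" for i
  proof (rule diff_step[OF Ph M])
    have "(Xb i - D) \<bullet> nb = 0" "(Yb i - D) \<bullet> nb = 0" using H that by (auto simp: line_l_def)
    hence "(Yb i - Xb i) \<bullet> nb = 0" by (simp add: inner_diff_left)
    thus "kron (row_vec (Yb i - Xb i)) (?Ph i) * ?M = kron (row_vec (Yb i - Xb i)) (?Ph i)"
      by (rule Mbar_fix[OF _ n Ph pos])
  qed
  show "Lambda k T A D nb F lp mp lm mm Omp Omm s X Xb = Lambda k T A D nb F lp mp lm mm Omp Omm s X Yb"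
  proof -
    let ?S = "node_side k T A (if s then Omm else Omp)"
    have "mat_sum 2 4 (\<lambda>i. kron (row_vec (A i - Xb i)) (?Ph i) * (?M - 1\<^sub>m 4)) ?S
        = mat_sum 2 4 (\<lambda>i. kron (row_vec (A i - Yb i)) (?Ph i) * (?M - 1\<^sub>m 4)) ?S"
      unfolding mat_sum_def by (intro arg_cong[where f="mat 2 4"] ext sum.cong refl) (use eq in presburger)
    thus ?thesis unfolding Lambda_def by (simp only:)
  qed
qed
end
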